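(* Let $E,F$ be Banach spaces over $\mathbb{K}$ and $m\in\mathbb{N}$. If the polynomial $P\in\mathcal{P}(^mE;F)$ has finite rank, then $\Delta^n_kP$ is of finite type for all $k,n\in\mathbb{N}$.
   Context: Banach spaces are over $\mathbb{K}=\mathbb{R}$ or $\mathbb{C}$. $\mathcal{P}(^jX;Y)$ is the space of continuous $j$-homogeneous polynomials $X\to Y$, $\mathcal{P}(^jX)=\mathcal{P}(^jX;\mathbb{K})$. For $P\in\mathcal{P}(^mE;F)$, $\Delta^n_kP\in\mathcal{P}(^n\mathcal{P}(^kF);\mathcal{P}(^{mnk}E))$ is defined by $\Delta^n_kP(q)(x)=q(P(x))^n$. A polynomial $Q\in\mathcal{P}(^jX;Y)$ has finite rank if the linear span of its range is finite dimensional; it is of finite type if it is a finite linear combination of polynomials of the form $x\mapsto\varphi(x)^jb$ with $\varphi\in X^*$, $b\in Y$. *)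

theory Defs
  imports "HOL-Analysis.Analysis" "HOL-Library.Function_Algebras"
begin

text \<open>Scalars: a type 'k of class real_normed_field + banach (by Gelfand-Mazur these are
  exactly R and C up to isometric isomorphism).  A Banach space over 'k is a real Banach
  space 'a (type class banach) together with a scalar multiplication s by 'k which makes
  it a 'k-vector space, extends the real scalar multiplication and is norm compatible.\<close>

definition kbanach :: "('k::{real_normed_field,banach} \<Rightarrow> 'a::banach \<Rightarrow> 'a) \<Rightarrow> bool" where
  "kbanach s \<longleftrightarrow> vector_space s
     \<and> (\<forall>r x. s (of_real r) x = scaleR r x)
     \<and> (\<forall>c x. norm (s c x) = norm c * norm x)"

text \<open>m-linear maps X^m \<rightarrow> Y, represented on sequences nat \<Rightarrow> X, depending only on the first
  m entries.\<close>

definition multilin :: "('k::field \<Rightarrow> 'a::ab_group_add \<Rightarrow> 'a) \<Rightarrow> ('k \<Rightarrow> 'b::ab_group_add \<Rightarrow> 'b) \<Rightarrow> nat \<Rightarrow> ((nat \<Rightarrow> 'a) \<Rightarrow> 'b) \<Rightarrow> bool" where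
  "multilin sX sY m A \<longleftrightarrow>
     (\<forall>i<m. \<forall>x. Vector_Spaces.linear sX sY (\<lambda>y. A (x(i := y))))
     \<and> (\<forall>x y. (\<forall>i<m. x i = y i) \<longrightarrow> A x = A y)"

definition hompoly :: "('k::field \<Rightarrow> 'a::{topological_space,ab_group_add} \<Rightarrow> 'a) \<Rightarrow> ('k \<Rightarrow> 'b::{topological_space,ab_group_add} \<Rightarrow> 'b) \<Rightarrow> nat \<Rightarrow> ('a \<Rightarrow> 'b) set" where
  "hompoly sX sY m = {P. continuous_on UNIV P \<and>
      (\<exists>A. multilin sX sY m A \<and> (\<forall>x. P x = A (\<lambda>_. x)))}"

definition polynorm :: "('a::real_normed_vector \<Rightarrow> 'b::real_normed_vector) \<Rightarrow> real" where
  "polynorm q = (SUP x\<in>cball 0 1. norm (q x))"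

definition fun_scale :: "('k \<Rightarrow> 'b \<Rightarrow> 'b) \<Rightarrow> 'k \<Rightarrow> ('a \<Rightarrow> 'b) \<Rightarrow> ('a \<Rightarrow> 'b)" where
  "fun_scale sY c f = (\<lambda>x. sY c (f x))"

text \<open>phi is an element of the (topological) dual of the normed space (X, sX, nX),
  where X is a subspace of an ambient vector space.\<close>

definition dual_on :: "'x set \<Rightarrow> ('k::real_normed_field \<Rightarrow> 'x::plus \<Rightarrow> 'x) \<Rightarrow> ('x \<Rightarrow> real) \<Rightarrow> ('x \<Rightarrow> 'k) \<Rightarrow> bool" where
  "dual_on X sX nX \<phi> \<longleftrightarrow>
     (\<forall>x\<in>X. \<forall>y\<in>X. \<phi> (x + y) = \<phi> x + \<phi> y)
     \<and> (\<forall>c. \<forall>x\<in>X. \<phi> (sX c x) = c * \<phi> x)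
     \<and> (\<exists>C. \<forall>x\<in>X. norm (\<phi> x) \<le> C * nX x)"

definition finite_type :: "'x set \<Rightarrow> ('k::real_normed_field \<Rightarrow> 'x::plus \<Rightarrow> 'x) \<Rightarrow> ('x \<Rightarrow> real)
     \<Rightarrow> ('k \<Rightarrow> 'y::comm_monoid_add \<Rightarrow> 'y) \<Rightarrow> 'y set \<Rightarrow> nat \<Rightarrow> ('x \<Rightarrow> 'y) \<Rightarrow> bool" where
  "finite_type X sX nX sY Y j Q \<longleftrightarrow>
     (\<exists>(r::nat) \<phi> b. (\<forall>i<r. dual_on X sX nX (\<phi> i) \<and> b i \<in> Y)
        \<and> (\<forall>x\<in>X. Q x = (\<Sum>i<r. sY ((\<phi> i x) ^ j) (b i))))"

definition finite_rank :: "('k::comm_ring_1 \<Rightarrow> 'b::ab_group_add \<Rightarrow> 'b) \<Rightarrow> ('a \<Rightarrow> 'b) \<Rightarrow> bool" where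
  "finite_rank sY P \<longleftrightarrow> (\<exists>B. finite B \<and> module.span sY (range P) \<subseteq> module.span sY B)"

definition Delta :: "nat \<Rightarrow> ('a \<Rightarrow> 'b) \<Rightarrow> ('b \<Rightarrow> 'k::power) \<Rightarrow> ('a \<Rightarrow> 'k)" where
  "Delta n P q = (\<lambda>x. (q (P x)) ^ n)"

end

theory Submission
  imports Defs
begin

lemma vlin_iff: "Vector_Spaces.linear s1 s2 f \<longleftrightarrow>
  (vector_space s1 \<and> vector_space s2 \<and> (\<forall>x y. f (x + y) = f x + f y) \<and> (\<forall>c x. f (s1 c x) = s2 c (f x)))"
  by (rule Vector_Spaces.linear_iff)

lemma vs_k: "vector_space ((*) :: 'k::field \<Rightarrow> 'k \<Rightarrow> 'k)"
  by (rule vector_space_over_itself.vector_space_axioms)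

lemma ml_lin:
  assumes "multilin sX sY m A" "i < m"
  shows "A (x(i := a + b)) = A (x(i := a)) + A (x(i := b))"
    and "A (x(i := sX c a)) = sY c (A (x(i := a)))"
  using assms unfolding multilin_def vlin_iff by blast+
lemma ml_loc:
  assumes "multilin sX sY m A" "\<And>i. i < m \<Longrightarrow> x i = y i"
  shows "A x = A y"
  using assms unfolding multilin_def by blast

lemma hpD:
  assumes "f \<in> hompoly sX sY m"
  obtains A where "multilin sX sY m A" "\<And>x. f x = A (\<lambda>_. x)" "continuous_on UNIV f"
  using assms unfolding hompoly_def by blast

lemma multilinI:
  assumes "vector_space sX" "vector_space sY"
    and "\<And>i x a b. i < m \<Longrightarrow> A (x(i := a + b)) = A (x(i := a)) + A (x(i := b))"
    and "\<And>i x c a. i < m \<Longrightarrow> A (x(i := sX c a)) = sY c (A (x(i := a)))"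
    and "\<And>x y. (\<And>i. i < m \<Longrightarrow> x i = y i) \<Longrightarrow> A x = A y"
  shows "multilin sX sY m A"
  unfolding multilin_def vlin_iff
  apply (intro conjI allI impI)
       apply (rule assms(1))
      apply (rule assms(2))
     apply (rule assms(3), assumption)
    apply (rule assms(4), assumption)
   apply (rule assms(5))
  apply blast
  done

lemma hp_zero:
  assumes "vector_space sX"
  shows "(\<lambda>_. 0) \<in> hompoly sX ((*) :: 'k::{field,topological_space} \<Rightarrow> _) d"
proof -
  have "multilin sX ((*) :: 'k \<Rightarrow> _) d (\<lambda>_. 0)" by (rule multilinI[OF assms vs_k]) simp_all
  then show ?thesis unfolding hompoly_def by (intro CollectI conjI exI[of _ "\<lambda>_. 0"]) simp_all
qed

lemma hp_one:
  assumes "vector_space sX"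
  shows "(\<lambda>_. 1) \<in> hompoly sX ((*) :: 'k::{field,topological_space} \<Rightarrow> _) 0"
proof -
  have "multilin sX ((*) :: 'k \<Rightarrow> _) 0 (\<lambda>_. 1)" by (rule multilinI[OF assms vs_k]) simp_all
  then show ?thesis unfolding hompoly_def by (intro CollectI conjI exI[of _ "\<lambda>_. 1"]) simp_all
qed

lemma hp_add:
  fixes sX :: "'k::real_normed_field \<Rightarrow> 'a::{topological_space,ab_group_add} \<Rightarrow> 'a"
  assumes "vector_space sX" and f: "f \<in> hompoly sX ((*) :: 'k \<Rightarrow> _) d"
    and g: "g \<in> hompoly sX ((*) :: 'k \<Rightarrow> _) d"
  shows "(\<lambda>x. f x + g x) \<in> hompoly sX (*) d"
proof -
  obtain A where A: "multilin sX (*) d A" "\<And>x. f x = A (\<lambda>_. x)" "continuous_on UNIV f" using hpD[OF f] by blast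
  obtain B where B: "multilin sX (*) d B" "\<And>x. g x = B (\<lambda>_. x)" "continuous_on UNIV g" using hpD[OF g] by blast
  have "multilin sX (*) d (\<lambda>y. A y + B y)"
  proof (rule multilinI[OF assms(1) vs_k])
    fix i x a b assume i: "i < d"
    show "A (x(i := a + b)) + B (x(i := a + b)) = A (x(i := a)) + B (x(i := a)) + (A (x(i := b)) + B (x(i := b)))"
      using ml_lin(1)[OF A(1) i] ml_lin(1)[OF B(1) i] by (simp add: algebra_simps)
  next
    fix i x c a assume i: "i < d"
    show "A (x(i := sX c a)) + B (x(i := sX c a)) = c * (A (x(i := a)) + B (x(i := a)))"
      using ml_lin(2)[OF A(1) i] ml_lin(2)[OF B(1) i] by (simp add: algebra_simps)
  next
    fix x y :: "nat \<Rightarrow> 'a" assume h: "\<And>i. i < d \<Longrightarrow> x i = y i"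
    show "A x + B x = A y + B y" using ml_loc[OF A(1) h] ml_loc[OF B(1) h] by simp
  qed
  then show ?thesis unfolding hompoly_def
    by (intro CollectI conjI exI[of _ "\<lambda>y. A y + B y"] continuous_on_add A(3) B(3)) (simp_all add: A(2) B(2))
qed

lemma hp_scale:
  fixes sX :: "'k::real_normed_field \<Rightarrow> 'a::{topological_space,ab_group_add} \<Rightarrow> 'a"
  assumes "vector_space sX" and f: "f \<in> hompoly sX ((*) :: 'k \<Rightarrow> _) d"
  shows "(\<lambda>x. c * f x) \<in> hompoly sX (*) d"
proof -
  obtain A where A: "multilin sX (*) d A" "\<And>x. f x = A (\<lambda>_. x)" "continuous_on UNIV f" using hpD[OF f] by blast
  have "multilin sX (*) d (\<lambda>y. c * A y)"
  proof (rule multilinI[OF assms(1) vs_k])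
    fix i x a b assume i: "i < d"
    show "c * A (x(i := a + b)) = c * A (x(i := a)) + c * A (x(i := b))"
      using ml_lin(1)[OF A(1) i] by (simp add: algebra_simps)
  next
    fix i x c' a assume i: "i < d"
    show "c * A (x(i := sX c' a)) = c' * (c * A (x(i := a)))"
      using ml_lin(2)[OF A(1) i] by (simp add: algebra_simps)
  next
    fix x y :: "nat \<Rightarrow> 'a" assume h: "\<And>i. i < d \<Longrightarrow> x i = y i"
    show "c * A x = c * A y" using ml_loc[OF A(1) h] by simp
  qed
  then show ?thesis unfolding hompoly_def
    by (intro CollectI conjI exI[of _ "\<lambda>y. c * A y"] continuous_on_mult continuous_on_const A(3)) (simp_all add: A(2))
qed

lemma hp_mult:
  fixes sX :: "'k::real_normed_field \<Rightarrow> 'a::{topological_space,ab_group_add} \<Rightarrow> 'a"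
  assumes "vector_space sX" and f: "f \<in> hompoly sX ((*) :: 'k \<Rightarrow> _) a"
    and g: "g \<in> hompoly sX ((*) :: 'k \<Rightarrow> _) b"
  shows "(\<lambda>x. f x * g x) \<in> hompoly sX (*) (a + b)"
proof -
  obtain A where A: "multilin sX (*) a A" "\<And>x. f x = A (\<lambda>_. x)" "continuous_on UNIV f" using hpD[OF f] by blast
  obtain B where B: "multilin sX (*) b B" "\<And>x. g x = B (\<lambda>_. x)" "continuous_on UNIV g" using hpD[OF g] by blast
  define C where "C y = A y * B (\<lambda>i. y (a + i))" for y
  have "multilin sX (*) (a + b) C"
  proof (rule multilinI[OF assms(1) vs_k])
    fix i x u v assume i: "i < a + b"
    show "C (x(i := u + v)) = C (x(i := u)) + C (x(i := v))"
    proof (cases "i < a")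
      case True
      have e: "(\<lambda>j. (x(i := w)) (a + j)) = (\<lambda>j. x (a + j))" for w using True by auto
      show ?thesis unfolding C_def e using ml_lin(1)[OF A(1) True] by (simp add: algebra_simps)
    next
      case False
      have e1: "A (x(i := w)) = A x" for w by (rule ml_loc[OF A(1)]) (use False in auto)
      have e2: "(\<lambda>j. (x(i := w)) (a + j)) = (\<lambda>j. x (a + j))(i - a := w)" for w using False by (auto simp: fun_eq_iff)
      have ib: "i - a < b" using i False by simp
      show ?thesis unfolding C_def e1 e2 using ml_lin(1)[OF B(1) ib] by (simp add: algebra_simps)
    qed
  next
    fix i x c u assume i: "i < a + b"
    show "C (x(i := sX c u)) = c * (C (x(i := u)))"
    proof (cases "i < a")
      case True
      have e: "(\<lambda>j. (x(i := w)) (a + j)) = (\<lambda>j. x (a + j))" for w using True by auto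
      show ?thesis unfolding C_def e using ml_lin(2)[OF A(1) True] by (simp add: algebra_simps)
    next
      case False
      have e1: "A (x(i := w)) = A x" for w by (rule ml_loc[OF A(1)]) (use False in auto)
      have e2: "(\<lambda>j. (x(i := w)) (a + j)) = (\<lambda>j. x (a + j))(i - a := w)" for w using False by (auto simp: fun_eq_iff)
      have ib: "i - a < b" using i False by simp
      show ?thesis unfolding C_def e1 e2 using ml_lin(2)[OF B(1) ib] by (simp add: algebra_simps)
    qed
  next
    fix x y :: "nat \<Rightarrow> 'a" assume h: "\<And>i. i < a + b \<Longrightarrow> x i = y i"
    have "A x = A y" by (rule ml_loc[OF A(1)]) (use h in auto)
    moreover have "B (\<lambda>i. x (a + i)) = B (\<lambda>i. y (a + i))" by (rule ml_loc[OF B(1)]) (use h in auto)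
    ultimately show "C x = C y" unfolding C_def by simp
  qed
  then show ?thesis unfolding hompoly_def
    by (intro CollectI conjI exI[of _ C] continuous_on_mult A(3) B(3)) (simp_all add: A(2) B(2) C_def)
qed

lemma hp_power:
  fixes sX :: "'k::real_normed_field \<Rightarrow> 'a::{topological_space,ab_group_add} \<Rightarrow> 'a"
  assumes "vector_space sX" and f: "f \<in> hompoly sX ((*) :: 'k \<Rightarrow> _) a"
  shows "(\<lambda>x. f x ^ n) \<in> hompoly sX (*) (a * n)"
proof (induction n)
  case 0 then show ?case using hp_one[OF assms(1)] by simp
next
  case (Suc n)
  from hp_mult[OF assms(1) f Suc] show ?case by (simp add: algebra_simps)
qed

lemma hp_comp:
  fixes sE :: "'k::real_normed_field \<Rightarrow> 'e::{topological_space,ab_group_add} \<Rightarrow> 'e"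
    and sF :: "'k \<Rightarrow> 'f::{topological_space,ab_group_add} \<Rightarrow> 'f"
  assumes vE: "vector_space sE" and vF: "vector_space sF"
    and P: "P \<in> hompoly sE sF m" and q: "q \<in> hompoly sF ((*) :: 'k \<Rightarrow> _) k"
  shows "(\<lambda>x. q (P x)) \<in> hompoly sE (*) (k * m)"
proof -
  obtain AP where AP: "multilin sE sF m AP" "\<And>x. P x = AP (\<lambda>_. x)" "continuous_on UNIV P" using hpD[OF P] by blast
  obtain Aq where Aq: "multilin sF (*) k Aq" "\<And>x. q x = Aq (\<lambda>_. x)" "continuous_on UNIV q" using hpD[OF q] by blast
  define V where "V y = (\<lambda>i. AP (\<lambda>l. y (i * m + l)))" for y
  define C where "C y = Aq (V y)" for y
  have key: "C (y(s := z)) = Aq ((V y)(s div m := AP ((\<lambda>l. y (s div m * m + l))(s mod m := z))))"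
    if s: "s < k * m" for y s z
  proof -
    have m: "m > 0" using s by (cases m) auto
    have sdk: "s div m < k" using s m by (simp add: less_mult_imp_div_less)
    show ?thesis unfolding C_def
    proof (rule ml_loc[OF Aq(1)])
      fix i assume "i < k"
      show "V (y(s := z)) i = ((V y)(s div m := AP ((\<lambda>l. y (s div m * m + l))(s mod m := z)))) i"
      proof (cases "i = s div m")
        case True
        have "(\<lambda>l. (y(s := z)) (i * m + l)) = (\<lambda>l. y (s div m * m + l))(s mod m := z)"
        proof
          fix l
          have "(i * m + l = s) = (l = s mod m)" using True div_mult_mod_eq[of s m]
            by (metis add_left_cancel mult.commute)
          then show "(y(s := z)) (i * m + l) = ((\<lambda>l. y (s div m * m + l))(s mod m := z)) l"
            using True by auto
        qed
        then show ?thesis unfolding V_def using True by simp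
      next
        case False
        have "AP (\<lambda>l. (y(s := z)) (i * m + l)) = AP (\<lambda>l. y (i * m + l))"
        proof (rule ml_loc[OF AP(1)])
          fix l assume l: "l < m"
          have "i * m + l \<noteq> s"
          proof
            assume "i * m + l = s"
            then have "s div m = i" using l by auto
            then show False using False by simp
          qed
          then show "(y(s := z)) (i * m + l) = y (i * m + l)" by simp
        qed
        then show ?thesis unfolding V_def using False by simp
      qed
    qed
  qed
  have "multilin sE (*) (k * m) C"
  proof (rule multilinI[OF vE vs_k])
    fix i and x :: "nat \<Rightarrow> 'e" and a b assume i: "i < k * m"
    have m: "m > 0" using i by (cases m) auto
    have sdk: "i div m < k" using i m by (simp add: less_mult_imp_div_less)
    have smm: "i mod m < m" using m by simp
    let ?w = "\<lambda>l. x (i div m * m + l)"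
    show "C (x(i := a + b)) = C (x(i := a)) + C (x(i := b))"
      unfolding key[OF i] ml_lin(1)[OF AP(1) smm] ml_lin(1)[OF Aq(1) sdk] ..
  next
    fix i and x :: "nat \<Rightarrow> 'e" and c a assume i: "i < k * m"
    have m: "m > 0" using i by (cases m) auto
    have sdk: "i div m < k" using i m by (simp add: less_mult_imp_div_less)
    have smm: "i mod m < m" using m by simp
    show "C (x(i := sE c a)) = c * C (x(i := a))"
      unfolding key[OF i] ml_lin(2)[OF AP(1) smm] ml_lin(2)[OF Aq(1) sdk] ..
  next
    fix x y :: "nat \<Rightarrow> 'e" assume h: "\<And>i. i < k * m \<Longrightarrow> x i = y i"
    show "C x = C y" unfolding C_def
    proof (rule ml_loc[OF Aq(1)])
      fix i assume i: "i < k"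
      show "V x i = V y i" unfolding V_def
      proof (rule ml_loc[OF AP(1)])
        fix l assume l: "l < m"
        have "i * m + l < k * m"
        proof -
          have "i * m + l < i * m + m" using l by simp
          also have "\<dots> = (i + 1) * m" by simp
          also have "\<dots> \<le> k * m" using i by (intro mult_right_mono) auto
          finally show ?thesis .
        qed
        then show "x (i * m + l) = y (i * m + l)" by (rule h)
      qed
    qed
  qed
  moreover have "q (P x) = C (\<lambda>_. x)" for x
    unfolding C_def V_def Aq(2) AP(2) ..
  moreover have "continuous_on UNIV (\<lambda>x. q (P x))"
    using continuous_on_compose[OF AP(3) continuous_on_subset[OF Aq(3) subset_UNIV]] by (simp add: o_def)
  ultimately show ?thesis unfolding hompoly_def
    by (intro CollectI conjI exI[of _ C]) simp_all
qed

lemma hp_homog: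
  fixes sF :: "'k::real_normed_field \<Rightarrow> 'f::{topological_space,ab_group_add} \<Rightarrow> 'f"
  assumes q: "q \<in> hompoly sF ((*) :: 'k \<Rightarrow> _) k"
  shows "q (sF c u) = c ^ k * q u"
proof -
  obtain A where A: "multilin sF (*) k A" "\<And>x. q x = A (\<lambda>_. x)" using hpD[OF q] by blast
  have "j \<le> k \<Longrightarrow> A (\<lambda>i. if i < j then sF c u else u) = c ^ j * A (\<lambda>_. u)" for j
  proof (induction j)
    case 0 then show ?case by simp
  next
    case (Suc j)
    have jk: "j < k" using Suc by simp
    have e1: "(\<lambda>i. if i < Suc j then sF c u else u) = (\<lambda>i. if i < j then sF c u else u)(j := sF c u)"
      by (auto simp: fun_eq_iff)
    have e2: "(\<lambda>i. if i < j then sF c u else u)(j := u) = (\<lambda>i. if i < j then sF c u else u)"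
      by (auto simp: fun_eq_iff)
    show ?case unfolding e1 ml_lin(2)[OF A(1) jk] e2 using Suc by simp
  qed
  from this[of k] have "A (\<lambda>i. if i < k then sF c u else u) = c ^ k * A (\<lambda>_. u)" by simp
  moreover have "A (\<lambda>i. if i < k then sF c u else u) = A (\<lambda>_. sF c u)"
    by (rule ml_loc[OF A(1)]) simp
  ultimately show ?thesis using A(2) by simp
qed

lemma ev_bound:
  fixes sF :: "'k::real_normed_field \<Rightarrow> 'f::real_normed_vector \<Rightarrow> 'f"
  assumes kb: "\<And>r x. sF (of_real r) x = r *\<^sub>R x" and q: "q \<in> hompoly sF ((*) :: 'k \<Rightarrow> _) k"
  shows "norm (q u) \<le> norm u ^ k * polynorm q"
proof -
  have hom: "q (r *\<^sub>R x) = (of_real r) ^ k * q x" for r x using hp_homog[OF q, of "of_real r" x] kb by simp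
  have cont: "continuous_on UNIV q" using q unfolding hompoly_def by blast
  have bdd: "bdd_above ((\<lambda>x. norm (q x)) ` cball 0 1)"
  proof (cases "k = 0")
    case True
    have c: "q x = q 0" for x using hom[of 0 x] True by simp
    show ?thesis
    proof (rule bdd_aboveI[where M="norm (q 0)"])
      fix z assume "z \<in> (\<lambda>x. norm (q x)) ` cball 0 1"
      then obtain x where "z = norm (q x)" by blast
      then show "z \<le> norm (q 0)" using c[of x] by simp
    qed
  next
    case False
    have q0: "q 0 = 0" using hom[of 0 0] False by (simp add: power_0_left)
    from cont have "\<exists>d>0. \<forall>y\<in>UNIV. dist y 0 < d \<longrightarrow> dist (q y) (q 0) < 1"
      unfolding continuous_on_iff by (meson UNIV_I zero_less_one)
    then obtain d where d: "d > 0" "\<And>y. dist y 0 < d \<Longrightarrow> norm (q y) < 1" using q0 by auto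
    show ?thesis
    proof (rule bdd_aboveI[where M = "(2 / d) ^ k"])
      fix z assume "z \<in> (\<lambda>x. norm (q x)) ` cball 0 1"
      then obtain x where x: "norm x \<le> 1" "z = norm (q x)" by auto
      define t where "t = d / 2"
      have t: "t > 0" using d unfolding t_def by simp
      have "norm (t *\<^sub>R x) < d" using x t unfolding t_def by (simp add: mult_le_cancel_left1 abs_of_pos d(1))
      then have "norm (q (t *\<^sub>R x)) < 1" using d(2)[of "t *\<^sub>R x"] by simp
      then have "t ^ k * norm (q x) < 1" unfolding hom by (simp add: norm_mult norm_power abs_of_pos t)
      then have "norm (q x) < 1 / t ^ k" using t by (simp add: field_simps)
      also have "1 / t ^ k = (2 / d) ^ k" unfolding t_def by (simp add: power_divide)
      finally show "z \<le> (2 / d) ^ k" using x by simp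
    qed
  qed
  have sup: "norm (q v) \<le> polynorm q" if "norm v \<le> 1" for v
    unfolding polynorm_def by (rule cSUP_upper[OF _ bdd]) (use that in simp)
  show ?thesis
  proof (cases "u = 0")
    case True
    show ?thesis
    proof (cases "k = 0")
      case True
      then show ?thesis using sup[of 0] \<open>u = 0\<close> by simp
    next
      case False
      then show ?thesis using hom[of 0 0] \<open>u = 0\<close> by (simp add: power_0_left)
    qed
  next
    case False
    define v where "v = (1 / norm u) *\<^sub>R u"
    have nv: "norm v = 1" unfolding v_def using False by simp
    have uv: "u = norm u *\<^sub>R v" unfolding v_def using False by simp
    have "norm (q u) = norm u ^ k * norm (q v)"
      by (subst uv, subst hom) (simp add: norm_mult norm_power)
    also have "\<dots> \<le> norm u ^ k * polynorm q"
      by (rule mult_left_mono[OF sup]) (use nv in simp_all)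
    finally show ?thesis .
  qed
qed

lemma vs_fun: "vector_space (fun_scale ((*) :: 'k::field \<Rightarrow> 'k \<Rightarrow> 'k) :: 'k \<Rightarrow> ('a \<Rightarrow> 'k) \<Rightarrow> ('a \<Rightarrow> 'k))"
  by unfold_locales (simp_all add: fun_scale_def fun_eq_iff algebra_simps)

interpretation fvs: vector_space "fun_scale ((*) :: 'k::field \<Rightarrow> 'k \<Rightarrow> 'k) :: 'k \<Rightarrow> ('a \<Rightarrow> 'k) \<Rightarrow> ('a \<Rightarrow> 'k)"
  by (rule vs_fun)

lemma fs_apply[simp]: "fun_scale f c g x = f c (g x)"
  by (simp add: fun_scale_def)

lemma sum_fun_apply: "(\<Sum>i\<in>A. F i) x = (\<Sum>i\<in>A. F i x)"
  by (induction A rule: infinite_finite_induct) auto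

lemma span_mult:
  fixes S1 S2 :: "('a \<Rightarrow> 'k::field) set"
  assumes f: "f \<in> fvs.span S1" and g: "g \<in> fvs.span S2"
  shows "f * g \<in> fvs.span {a * b | a b. a \<in> S1 \<and> b \<in> S2}"
proof -
  let ?M = "{a * b | a b. a \<in> S1 \<and> b \<in> S2}"
  have inner: "a * g \<in> fvs.span ?M" if a: "a \<in> S1" for a
  proof -
    have "g \<in> {g. a * g \<in> fvs.span ?M}"
    proof (rule fvs.span_subspace_induct[OF g])
      show "fvs.subspace {g. a * g \<in> fvs.span ?M}"
      proof (rule fvs.subspaceI)
        show "0 \<in> {g. a * g \<in> fvs.span ?M}" using fvs.span_zero by simp
      next
        fix x y assume "x \<in> {g. a * g \<in> fvs.span ?M}" "y \<in> {g. a * g \<in> fvs.span ?M}"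
        then show "x + y \<in> {g. a * g \<in> fvs.span ?M}" using fvs.span_add by (simp add: distrib_left)
      next
        fix c x assume "x \<in> {g. a * g \<in> fvs.span ?M}"
        moreover have "a * fun_scale (*) c x = fun_scale (*) c (a * x)" by (simp add: fun_eq_iff algebra_simps)
        ultimately show "fun_scale (*) c x \<in> {g. a * g \<in> fvs.span ?M}" using fvs.span_scale by simp
      qed
    next
      fix b assume "b \<in> S2" then show "b \<in> {g. a * g \<in> fvs.span ?M}" using a by (auto intro: fvs.span_base)
    qed
    then show ?thesis by simp
  qed
  have "f \<in> {f. f * g \<in> fvs.span ?M}"
  proof (rule fvs.span_subspace_induct[OF f])
    show "fvs.subspace {f. f * g \<in> fvs.span ?M}"
    proof (rule fvs.subspaceI)
      show "0 \<in> {f. f * g \<in> fvs.span ?M}" using fvs.span_zero by simp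
    next
      fix x y assume "x \<in> {f. f * g \<in> fvs.span ?M}" "y \<in> {f. f * g \<in> fvs.span ?M}"
      then show "x + y \<in> {f. f * g \<in> fvs.span ?M}" using fvs.span_add by (simp add: distrib_right)
    next
      fix c x assume "x \<in> {f. f * g \<in> fvs.span ?M}"
      moreover have "fun_scale (*) c x * g = fun_scale (*) c (x * g)" by (simp add: fun_eq_iff algebra_simps)
      ultimately show "fun_scale (*) c x \<in> {f. f * g \<in> fvs.span ?M}" using fvs.span_scale by simp
    qed
  next
    fix a assume "a \<in> S1" then show "a \<in> {f. f * g \<in> fvs.span ?M}" using inner by simp
  qed
  then show ?thesis by simp
qed

lemma (in vector_space) exch:
  assumes "finite S" "g \<in> span S" "g \<noteq> 0"
  shows "\<exists>b\<in>S. S \<subseteq> span (insert g (S - {b}))"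
  using assms
proof (induction S rule: finite_induct)
  case empty then show ?case by simp
next
  case (insert s S)
  show ?case
  proof (cases "g \<in> span S")
    case True
    then obtain b where b: "b \<in> S" "S \<subseteq> span (insert g (S - {b}))" using insert by blast
    have "span (insert g (S - {b})) \<subseteq> span (insert g (insert s S - {b}))" by (rule span_mono) auto
    moreover have "s \<in> span (insert g (insert s S - {b}))" using b insert(2) by (intro span_base) auto
    ultimately show ?thesis using b by (intro bexI[of _ b]) auto
  next
    case False
    have "s \<in> span (insert g S)" by (rule in_span_insert[OF insert(4) False])
    moreover have "S \<subseteq> span (insert g S)" using span_superset by blast
    moreover have "insert s S - {s} = S" using insert(2) by auto
    ultimately show ?thesis by (intro bexI[of _ s]) auto
  qed
qed

lemma ev_comp:
  fixes \<Phi> :: "('a \<Rightarrow> 'k::field) \<Rightarrow> ('a \<Rightarrow> 'k)"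
  assumes L: "L \<in> fvs.span (range (\<lambda>p f. f p))"
    and base: "\<And>p. (\<lambda>f. \<Phi> f p) \<in> fvs.span (range (\<lambda>p f. f p))"
  shows "(\<lambda>f. L (\<Phi> f)) \<in> fvs.span (range (\<lambda>p f. f p))"
proof -
  let ?EV = "fvs.span (range (\<lambda>p (f::'a \<Rightarrow> 'k). f p))"
  have "L \<in> {L. (\<lambda>f. L (\<Phi> f)) \<in> ?EV}"
  proof (rule fvs.span_subspace_induct[OF L])
    show "fvs.subspace {L. (\<lambda>f. L (\<Phi> f)) \<in> ?EV}"
    proof (rule fvs.subspaceI)
      show "0 \<in> {L. (\<lambda>f. L (\<Phi> f)) \<in> ?EV}" using fvs.span_zero by (simp add: zero_fun_def)
    next
      fix x y assume "x \<in> {L. (\<lambda>f. L (\<Phi> f)) \<in> ?EV}" "y \<in> {L. (\<lambda>f. L (\<Phi> f)) \<in> ?EV}"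
      moreover have "(\<lambda>f. (x + y) (\<Phi> f)) = (\<lambda>f. x (\<Phi> f)) + (\<lambda>f. y (\<Phi> f))" by (simp add: fun_eq_iff)
      ultimately show "x + y \<in> {L. (\<lambda>f. L (\<Phi> f)) \<in> ?EV}" using fvs.span_add by simp
    next
      fix c x assume "x \<in> {L. (\<lambda>f. L (\<Phi> f)) \<in> ?EV}"
      moreover have "(\<lambda>f. fun_scale (*) c x (\<Phi> f)) = fun_scale (*) c (\<lambda>f. x (\<Phi> f))" by (simp add: fun_eq_iff)
      ultimately show "fun_scale (*) c x \<in> {L. (\<lambda>f. L (\<Phi> f)) \<in> ?EV}" using fvs.span_scale by simp
    qed
  next
    fix e assume "e \<in> range (\<lambda>p (f::'a \<Rightarrow> 'k). f p)"
    then obtain p where "e = (\<lambda>f. f p)" by blast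
    then show "e \<in> {L. (\<lambda>f. L (\<Phi> f)) \<in> ?EV}" using base[of p] by simp
  qed
  then show ?thesis by simp
qed

lemma interp:
  fixes S G :: "('a \<Rightarrow> 'k::field) set"
  assumes "finite S" "G \<subseteq> fvs.span S"
  shows "\<exists>(r::nat) g L. (\<forall>i<r. g i \<in> G \<and> L i \<in> fvs.span (range (\<lambda>p f. f p)))
            \<and> (\<forall>f\<in>G. f = (\<Sum>i<r. fun_scale (*) (L i f) (g i)))"
  using assms
proof (induction "card S" arbitrary: S G rule: less_induct)
  case less
  let ?EV = "fvs.span (range (\<lambda>p (f::'a \<Rightarrow> 'k). f p))"
  show ?case
  proof (cases "G \<subseteq> {0}")
    case True
    show ?thesis by (rule exI[of _ "0::nat"]) (use True in auto)
  next
    case False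
    then obtain g0 where g0: "g0 \<in> G" "g0 \<noteq> 0" by blast
    then obtain p0 where p0: "g0 p0 \<noteq> 0" by (auto simp: fun_eq_iff)
    have "g0 \<in> fvs.span S" using less g0 by blast
    then obtain b where b: "b \<in> S" "S \<subseteq> fvs.span (insert g0 (S - {b}))"
      using fvs.exch[OF less(2) _ g0(2)] by blast
    define \<pi> where "\<pi> f = f - fun_scale (*) (f p0 / g0 p0) g0" for f
    have \<pi>_add: "\<pi> (x + y) = \<pi> x + \<pi> y" for x y
      unfolding \<pi>_def by (simp add: fun_eq_iff algebra_simps add_divide_distrib)
    have \<pi>_scale: "\<pi> (fun_scale (*) c x) = fun_scale (*) c (\<pi> x)" for c x
      unfolding \<pi>_def by (simp add: fun_eq_iff algebra_simps)
    have \<pi>_zero: "\<pi> 0 = 0" unfolding \<pi>_def by (simp add: fun_eq_iff)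
    have \<pi>_g0: "\<pi> g0 = 0" unfolding \<pi>_def using p0 by (simp add: fun_eq_iff)
    define S' where "S' = \<pi> ` (S - {b})"
    have finS': "finite S'" unfolding S'_def using less(2) by simp
    have "card S' \<le> card (S - {b})" unfolding S'_def by (rule card_image_le) (use less(2) in simp)
    also have "\<dots> < card S" using b(1) less(2) by (metis card_Diff1_less)
    finally have cardlt: "card S' < card S" .
    have spi: "h \<in> fvs.span (insert g0 (S - {b})) \<Longrightarrow> \<pi> h \<in> fvs.span S'" for h
    proof -
      assume h: "h \<in> fvs.span (insert g0 (S - {b}))"
      have "h \<in> {h. \<pi> h \<in> fvs.span S'}"
      proof (rule fvs.span_subspace_induct[OF h])
        show "fvs.subspace {h. \<pi> h \<in> fvs.span S'}"
        proof (rule fvs.subspaceI)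
          show "0 \<in> {h. \<pi> h \<in> fvs.span S'}" using fvs.span_zero \<pi>_zero by simp
        next
          fix x y assume "x \<in> {h. \<pi> h \<in> fvs.span S'}" "y \<in> {h. \<pi> h \<in> fvs.span S'}"
          then show "x + y \<in> {h. \<pi> h \<in> fvs.span S'}" using fvs.span_add \<pi>_add by simp
        next
          fix c x assume "x \<in> {h. \<pi> h \<in> fvs.span S'}"
          then show "fun_scale (*) c x \<in> {h. \<pi> h \<in> fvs.span S'}" using fvs.span_scale \<pi>_scale by simp
        qed
      next
        fix s assume "s \<in> insert g0 (S - {b})"
        then show "s \<in> {h. \<pi> h \<in> fvs.span S'}"
        proof
          assume "s = g0" then show ?thesis using \<pi>_g0 fvs.span_zero by simp
        next
          assume "s \<in> S - {b}" then have "\<pi> s \<in> S'" unfolding S'_def by blast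
          then show ?thesis using fvs.span_base by simp
        qed
      qed
      then show ?thesis by simp
    qed
    have spanS: "fvs.span S \<subseteq> fvs.span (insert g0 (S - {b}))"
      using fvs.span_mono[OF b(2)] fvs.span_span by blast
    have G': "\<pi> ` G \<subseteq> fvs.span S'" using less(3) spanS spi by blast
    obtain r :: nat and g' L' where IH: "\<forall>i<r. g' i \<in> \<pi> ` G \<and> L' i \<in> ?EV"
        "\<forall>f\<in>\<pi> ` G. f = (\<Sum>i<r. fun_scale (*) (L' i f) (g' i))"
      using less(1)[OF cardlt finS' G'] by blast
    have "\<forall>i. \<exists>hh. i < r \<longrightarrow> hh \<in> G \<and> g' i = \<pi> hh" using IH(1) by blast
    then obtain h where h: "\<And>i. i < r \<Longrightarrow> h i \<in> G \<and> g' i = \<pi> (h i)"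
      using choice[of "\<lambda>i hh. i < r \<longrightarrow> hh \<in> G \<and> g' i = \<pi> hh"] by blast
    define g where "g i = (if i < r then h i else g0)" for i
    define L where "L i = (if i < r then (\<lambda>f. L' i (\<pi> f))
        else (\<lambda>f. (f p0 - (\<Sum>j<r. L' j (\<pi> f) * h j p0)) / g0 p0))" for i
    have pib: "(\<lambda>f. \<pi> f p) \<in> ?EV" for p
    proof -
      have "(\<lambda>f. \<pi> f p) = (\<lambda>f. f p) - fun_scale (*) (g0 p / g0 p0) (\<lambda>f. f p0)"
        unfolding \<pi>_def by (simp add: fun_eq_iff)
      moreover have e1: "(\<lambda>f. f q) \<in> ?EV" for q by (rule fvs.span_base) (rule rangeI)
      ultimately show ?thesis using fvs.span_diff[OF e1 fvs.span_scale[OF e1]] by simp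
    qed
    have Lpi: "(\<lambda>f. L' i (\<pi> f)) \<in> ?EV" if i: "i < r" for i
      using ev_comp[of "L' i" \<pi>, OF _ pib] IH(1) i by blast
    have Lr: "L r \<in> ?EV"
    proof -
      have "L r = fun_scale (*) (1 / g0 p0) ((\<lambda>f. f p0) - (\<Sum>j<r. fun_scale (*) (h j p0) (\<lambda>f. L' j (\<pi> f))))"
        unfolding L_def by (simp add: fun_eq_iff sum_fun_apply algebra_simps diff_divide_distrib)
      also have "\<dots> \<in> ?EV"
        by (intro fvs.span_scale fvs.span_diff fvs.span_sum fvs.span_base Lpi) auto
      finally show ?thesis .
    qed
    show ?thesis
    proof (intro exI[of _ "Suc r"] exI[of _ g] exI[of _ L] conjI ballI allI impI)
      fix i assume "i < Suc r"
      then show "g i \<in> G" using h g0 unfolding g_def by auto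
      show "L i \<in> ?EV" using Lpi Lr \<open>i < Suc r\<close> unfolding L_def by (cases "i < r") auto
    next
      fix f assume f: "f \<in> G"
      have pf: "\<pi> f = (\<Sum>i<r. fun_scale (*) (L' i (\<pi> f)) (\<pi> (h i)))"
        using IH(2) f h by auto
      show "f = (\<Sum>i<Suc r. fun_scale (*) (L i f) (g i))"
      proof
        fix x
        have e: "f x - f p0 / g0 p0 * g0 x = (\<Sum>i<r. L' i (\<pi> f) * (h i x - h i p0 / g0 p0 * g0 x))"
          using fun_cong[OF pf, of x] unfolding \<pi>_def by (simp add: sum_fun_apply)
        have "(\<Sum>i<r. L' i (\<pi> f) * (h i x - h i p0 / g0 p0 * g0 x))
            = (\<Sum>i<r. L' i (\<pi> f) * h i x) - (\<Sum>i<r. L' i (\<pi> f) * h i p0) / g0 p0 * g0 x"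
        proof -
          have "(\<Sum>i<r. L' i (\<pi> f) * (h i x - h i p0 / g0 p0 * g0 x))
             = (\<Sum>i<r. L' i (\<pi> f) * h i x - L' i (\<pi> f) * h i p0 * (g0 x / g0 p0))"
            by (rule sum.cong) (simp_all add: algebra_simps)
          also have "\<dots> = (\<Sum>i<r. L' i (\<pi> f) * h i x) - (\<Sum>i<r. L' i (\<pi> f) * h i p0) * (g0 x / g0 p0)"
            by (simp add: sum_subtractf sum_distrib_right sum_divide_distrib)
          finally show ?thesis by simp
        qed
        with e have "f x = (\<Sum>i<r. L' i (\<pi> f) * h i x) + ((f p0 - (\<Sum>j<r. L' j (\<pi> f) * h j p0)) / g0 p0) * g0 x"
          using p0 by (simp add: field_simps)
        then show "f x = (\<Sum>i<Suc r. fun_scale (*) (L i f) (g i)) x"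
          unfolding sum_fun_apply by (simp add: L_def g_def)
      qed
    qed
  qed
qed

lemma T_span:
  fixes sF :: "'k::real_normed_field \<Rightarrow> 'f::{topological_space,ab_group_add} \<Rightarrow> 'f"
  assumes vF: "vector_space sF" and B: "finite B"
  shows "\<exists>S. finite S \<and> (\<forall>u \<in> module.span sF B.
            (\<lambda>q. if q \<in> hompoly sF ((*)::'k\<Rightarrow>_) k then q u else 0) \<in> fvs.span S)"
proof -
  interpret F: vector_space sF by (rule vF)
  let ?X = "hompoly sF ((*)::'k\<Rightarrow>_) k"
  define Aq where "Aq q = (SOME A. multilin sF (*) k A \<and> (\<forall>x. q x = A (\<lambda>_. x)))" for q :: "'f \<Rightarrow> 'k"
  have Aq: "multilin sF (*) k (Aq q) \<and> (\<forall>x. q x = Aq q (\<lambda>_. x))" if "q \<in> ?X" for q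
  proof -
    have "\<exists>A. multilin sF (*) k A \<and> (\<forall>x. q x = A (\<lambda>_. x))" using that unfolding hompoly_def by blast
    then show ?thesis unfolding Aq_def by (rule someI_ex)
  qed
  define E where "E y = (\<lambda>q. if q \<in> ?X then Aq q y else 0)" for y
  have E_add: "E (y(j := a + b)) = E (y(j := a)) + E (y(j := b))" if "j < k" for y j a b
    unfolding E_def using ml_lin(1)[OF conjunct1[OF Aq] that] by (simp add: fun_eq_iff)
  have E_scale: "E (y(j := sF c a)) = fun_scale (*) c (E (y(j := a)))" if "j < k" for y j c a
    unfolding E_def using ml_lin(2)[OF conjunct1[OF Aq] that] by (simp add: fun_eq_iff)
  have E_loc: "E y = E y'" if "\<And>i. i < k \<Longrightarrow> y i = y' i" for y y'
    unfolding E_def using ml_loc[OF conjunct1[OF Aq] that] by (simp add: fun_eq_iff)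
  define \<E> where "\<E> = E ` (PiE {..<k} (\<lambda>_. B))"
  have fin: "finite \<E>" unfolding \<E>_def using B by (simp add: finite_PiE)
  have claim: "\<forall>y. (\<forall>i<j. y i \<in> F.span B) \<and> (\<forall>i. j \<le> i \<and> i < k \<longrightarrow> y i \<in> B) \<longrightarrow> E y \<in> fvs.span \<E>"
    if "j \<le> k" for j
    using that
  proof (induction j)
    case 0
    show ?case
    proof (intro allI impI)
      fix y assume h: "(\<forall>i<0. y i \<in> F.span B) \<and> (\<forall>i. 0 \<le> i \<and> i < k \<longrightarrow> y i \<in> B)"
      have "restrict y {..<k} \<in> PiE {..<k} (\<lambda>_. B)" using h by auto
      moreover have "E y = E (restrict y {..<k})" by (rule E_loc) simp
      ultimately show "E y \<in> fvs.span \<E>" unfolding \<E>_def by (auto intro: fvs.span_base)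
    qed
  next
    case (Suc j)
    have jk: "j < k" using Suc by simp
    show ?case
    proof (intro allI impI)
      fix y assume h: "(\<forall>i<Suc j. y i \<in> F.span B) \<and> (\<forall>i. Suc j \<le> i \<and> i < k \<longrightarrow> y i \<in> B)"
      have "y j \<in> {a. E (y(j := a)) \<in> fvs.span \<E>}"
      proof (rule F.span_subspace_induct)
        show "y j \<in> F.span B" using h by simp
      next
        show "F.subspace {a. E (y(j := a)) \<in> fvs.span \<E>}"
        proof (rule F.subspaceI)
          have "E (y(j := 0)) = 0"
            using E_scale[OF jk, of y 0 0] by (simp add: fun_eq_iff)
          then show "0 \<in> {a. E (y(j := a)) \<in> fvs.span \<E>}" using fvs.span_zero by simp
        next
          fix a b assume "a \<in> {a. E (y(j := a)) \<in> fvs.span \<E>}" "b \<in> {a. E (y(j := a)) \<in> fvs.span \<E>}"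
          then show "a + b \<in> {a. E (y(j := a)) \<in> fvs.span \<E>}" using E_add[OF jk] fvs.span_add by simp
        next
          fix c a assume "a \<in> {a. E (y(j := a)) \<in> fvs.span \<E>}"
          then show "sF c a \<in> {a. E (y(j := a)) \<in> fvs.span \<E>}" using E_scale[OF jk] fvs.span_scale by simp
        qed
      next
        fix a assume a: "a \<in> B"
        have hyp: "(\<forall>i<j. (y(j := a)) i \<in> F.span B) \<and> (\<forall>i. j \<le> i \<and> i < k \<longrightarrow> (y(j := a)) i \<in> B)"
          using h a by auto
        have "E (y(j := a)) \<in> fvs.span \<E>" using Suc.IH[OF less_imp_le[OF jk]] hyp by blast
        then show "a \<in> {a. E (y(j := a)) \<in> fvs.span \<E>}" by (rule CollectI)
      qed
      then show "E y \<in> fvs.span \<E>" by simp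
    qed
  qed
  show ?thesis
  proof (intro exI[of _ \<E>] conjI ballI fin)
    fix u assume u: "u \<in> F.span B"
    have "(\<forall>i<k. (\<lambda>_. u) i \<in> F.span B) \<and> (\<forall>i. k \<le> i \<and> i < k \<longrightarrow> (\<lambda>_. u) i \<in> B)"
    proof (intro conjI allI impI)
      fix i show "(\<lambda>_. u) i \<in> F.span B" using u by simp
    next
      fix i :: nat assume "k \<le> i \<and> i < k" then have False by linarith
      then show "(\<lambda>_. u) i \<in> B" by (rule FalseE)
    qed
    then have "E (\<lambda>_. u) \<in> fvs.span \<E>" by (rule claim[OF order_refl, rule_format])
    moreover have "(\<lambda>q. if q \<in> ?X then q u else 0) = E (\<lambda>_. u)"
    proof (rule ext)
      fix q show "(if q \<in> ?X then q u else 0) = E (\<lambda>_. u) q"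
      proof (cases "q \<in> ?X")
        case True
        then have "q u = Aq q (\<lambda>_. u)" using Aq by blast
        then show ?thesis unfolding E_def using True by simp
      next
        case False
        then show ?thesis unfolding E_def by simp
      qed
    qed
    ultimately show "(\<lambda>q. if q \<in> ?X then q u else 0) \<in> fvs.span \<E>" by simp
  qed
qed

lemma pow_span:
  fixes f :: "'u \<Rightarrow> 'a \<Rightarrow> 'k::field"
  assumes "finite S1" "\<And>u. f u \<in> fvs.span S1"
  shows "\<exists>S. finite S \<and> (\<forall>u. (\<lambda>q. (f u q) ^ n) \<in> fvs.span S)"
proof (induction n)
  case 0
  have e: "(\<lambda>q. (f u q) ^ 0) = (1 :: 'a \<Rightarrow> 'k)" for u by (simp add: fun_eq_iff)
  show ?case
  proof (intro exI[of _ "{1 :: 'a \<Rightarrow> 'k}"] conjI allI)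
    show "finite {1 :: 'a \<Rightarrow> 'k}" by simp
  next
    fix u show "(\<lambda>q. (f u q) ^ 0) \<in> fvs.span {1}" unfolding e by (rule fvs.span_base) simp
  qed
next
  case (Suc n)
  then obtain S where S: "finite S" "\<And>u. (\<lambda>q. (f u q) ^ n) \<in> fvs.span S" by blast
  have "(\<lambda>q. (f u q) ^ Suc n) = f u * (\<lambda>q. (f u q) ^ n)" for u by (simp add: fun_eq_iff)
  then have "\<forall>u. (\<lambda>q. (f u q) ^ Suc n) \<in> fvs.span {a * b | a b. a \<in> S1 \<and> b \<in> S}"
    using span_mult[OF assms(2) S(2)] by simp
  moreover have "finite {a * b | a b. a \<in> S1 \<and> b \<in> S}"
    using finite_image_set2[of "\<lambda>a. a \<in> S1" "\<lambda>b. b \<in> S" "(*)"] assms(1) S(1) by simp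
  ultimately show ?case by blast
qed

theorem mainTheorem12:
  fixes sE :: "'k::{real_normed_field,banach} \<Rightarrow> 'e::banach \<Rightarrow> 'e"
    and sF :: "'k \<Rightarrow> 'f::banach \<Rightarrow> 'f"
    and m :: nat
    and P :: "'e \<Rightarrow> 'f"
  assumes "kbanach sE" and "kbanach sF"
    and "P \<in> hompoly sE sF m"
    and "finite_rank sF P"
  shows "\<forall>k n. finite_type (hompoly sF (*) k) (fun_scale (*)) polynorm
                 (fun_scale (*)) (hompoly sE (*) (m * n * k)) n (Delta n P)"
proof (intro allI)
  fix k n :: nat
  have vE: "vector_space sE" using assms(1) unfolding kbanach_def by blast
  have vF: "vector_space sF" using assms(2) unfolding kbanach_def by blast
  have sR: "\<And>r x. sF (of_real r) x = r *\<^sub>R x" using assms(2) unfolding kbanach_def by blast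
  interpret F: vector_space sF by (rule vF)
  let ?X = "hompoly sF ((*)::'k\<Rightarrow>_) k"
  let ?EV = "fvs.span (range (\<lambda>p (f::('f \<Rightarrow> 'k) \<Rightarrow> 'k). f p))"
  define T1 where "T1 x = (\<lambda>q. if q \<in> ?X then q (P x) else 0)" for x
  define T where "T x = (\<lambda>q. (T1 x q) ^ n)" for x
  obtain B where B: "finite B" "F.span (range P) \<subseteq> F.span B"
    using assms(4) unfolding finite_rank_def by (elim exE conjE) (rule that; assumption)
  have PB: "P x \<in> F.span B" for x by (rule subsetD[OF B(2) F.span_base[OF rangeI]])
  obtain S1 where S1: "finite S1" "\<forall>u\<in>F.span B. (\<lambda>q. if q \<in> ?X then q u else 0) \<in> fvs.span S1"
    using T_span[OF vF B(1), of k] by (elim exE conjE) (rule that; assumption)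
  have T1S: "T1 x \<in> fvs.span S1" for x unfolding T1_def by (rule bspec[OF S1(2) PB])
  have "\<exists>S. finite S \<and> (\<forall>x. (\<lambda>q. (T1 x q) ^ n) \<in> fvs.span S)"
    by (rule pow_span[OF S1(1) T1S])
  then obtain S where S0: "finite S" "\<forall>x. (\<lambda>q. (T1 x q) ^ n) \<in> fvs.span S" by (elim exE conjE)
  have S: "finite S" "T x \<in> fvs.span S" for x
    using S0 unfolding T_def by simp_all
  have RT: "range T \<subseteq> fvs.span S" by (rule image_subsetI) (rule S(2))
  obtain r :: nat and g L where gL: "\<forall>i<r. g i \<in> range T \<and> L i \<in> ?EV"
      "\<forall>f\<in>range T. f = (\<Sum>i<r. fun_scale (*) (L i f) (g i))"
    using interp[OF S(1) RT] by (elim exE conjE) (rule that; assumption)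
  have ex1: "\<forall>i. \<exists>x. i < r \<longrightarrow> g i = T x"
  proof
    fix i show "\<exists>x. i < r \<longrightarrow> g i = T x"
    proof (cases "i < r")
      case True
      then have "g i \<in> range T" using gL(1) by simp
      then obtain x where "g i = T x" by (elim rangeE)
      then show ?thesis by (intro exI[of _ x]) simp
    qed simp
  qed
  have "\<exists>xs. \<forall>i. i < r \<longrightarrow> g i = T (xs i)" by (rule choice[OF ex1])
  then obtain xs where xs0: "\<forall>i. i < r \<longrightarrow> g i = T (xs i)" by (elim exE) (erule that)
  have xs: "\<And>i. i < r \<Longrightarrow> g i = T (xs i)" using xs0 by simp
  define \<phi> where "\<phi> i = (\<lambda>q::'f \<Rightarrow> 'k. q (P (xs i)))" for i
  define b where "b i = (\<lambda>x. L i (T x))" for i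
  have T1hp: "(\<lambda>x. T1 x q) \<in> hompoly sE (*) (k * m)" for q
  proof (cases "q \<in> ?X")
    case True
    then show ?thesis unfolding T1_def using hp_comp[OF vE vF assms(3) True] by simp
  next
    case False
    then show ?thesis unfolding T1_def using hp_zero[OF vE] by simp
  qed
  have Thp: "(\<lambda>x. T x q) \<in> hompoly sE (*) (m * n * k)" for q
    using hp_power[OF vE T1hp[of q], of n] unfolding T_def by (simp add: mult_ac)
  have bhp: "b i \<in> hompoly sE (*) (m * n * k)" if i: "i < r" for i
  proof -
    let ?Y = "hompoly sE ((*)::'k\<Rightarrow>_) (m * n * k)"
    have "L i \<in> {L. (\<lambda>x. L (T x)) \<in> ?Y}"
    proof (rule fvs.span_subspace_induct)
      show "L i \<in> ?EV" using gL(1) i by simp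
    next
      show "fvs.subspace {L. (\<lambda>x. L (T x)) \<in> ?Y}"
      proof (rule fvs.subspaceI)
        show "0 \<in> {L. (\<lambda>x. L (T x)) \<in> ?Y}" using hp_zero[OF vE] by simp
      next
        fix L1 L2 assume "L1 \<in> {L. (\<lambda>x. L (T x)) \<in> ?Y}" "L2 \<in> {L. (\<lambda>x. L (T x)) \<in> ?Y}"
        then show "L1 + L2 \<in> {L. (\<lambda>x. L (T x)) \<in> ?Y}" using hp_add[OF vE] by simp
      next
        fix c L1 assume "L1 \<in> {L. (\<lambda>x. L (T x)) \<in> ?Y}"
        then show "fun_scale (*) c L1 \<in> {L. (\<lambda>x. L (T x)) \<in> ?Y}" using hp_scale[OF vE] by (simp add: fun_scale_def)
      qed
    next
      fix e assume "e \<in> range (\<lambda>p (f::('f \<Rightarrow> 'k) \<Rightarrow> 'k). f p)"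
      then obtain q where "e = (\<lambda>f. f q)" by (elim rangeE) (rule that)
      then show "e \<in> {L. (\<lambda>x. L (T x)) \<in> ?Y}" using Thp[of q] by simp
    qed
    then show ?thesis unfolding b_def by simp
  qed
  have dual: "dual_on ?X (fun_scale (*)) polynorm (\<phi> i)" for i
    unfolding dual_on_def \<phi>_def
  proof (intro conjI ballI allI)
    fix x y :: "'f \<Rightarrow> 'k" show "(x + y) (P (xs i)) = x (P (xs i)) + y (P (xs i))" by simp
  next
    fix c and x :: "'f \<Rightarrow> 'k" show "fun_scale (*) c x (P (xs i)) = c * x (P (xs i))" by (simp add: fun_scale_def)
  next
    show "\<exists>C. \<forall>x\<in>?X. norm (x (P (xs i))) \<le> C * polynorm x"
      by (rule exI[of _ "norm (P (xs i)) ^ k"]) (intro ballI ev_bound[OF sR])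
  qed
  show "finite_type ?X (fun_scale (*)) polynorm (fun_scale (*)) (hompoly sE (*) (m * n * k)) n (Delta n P)"
    unfolding finite_type_def
  proof (intro exI[of _ r] exI[of _ \<phi>] exI[of _ b] conjI allI impI ballI)
    fix i assume "i < r"
    show "dual_on ?X (fun_scale (*)) polynorm (\<phi> i)" by (rule dual)
    show "b i \<in> hompoly sE (*) (m * n * k)" using \<open>i < r\<close> by (rule bhp)
  next
    fix q assume q: "q \<in> ?X"
    show "Delta n P q = (\<Sum>i<r. fun_scale (*) (\<phi> i q ^ n) (b i))"
    proof
      fix x
      have e: "T x = (\<Sum>i<r. fun_scale (*) (L i (T x)) (g i))" by (rule bspec[OF gL(2)]) (rule rangeI)
      have "T x q = (\<Sum>i<r. fun_scale (*) (L i (T x)) (g i)) q" by (rule fun_cong[OF e])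
      also have "\<dots> = (\<Sum>i<r. L i (T x) * g i q)" by (simp add: sum_fun_apply fun_scale_def)
      also have "\<dots> = (\<Sum>i<r. (\<phi> i q ^ n) * b i x)"
      proof (rule sum.cong)
        fix i assume "i \<in> {..<r}"
        then have i: "i < r" by simp
        have "g i q = \<phi> i q ^ n" unfolding xs[OF i] T_def T1_def \<phi>_def using q by simp
        then show "L i (T x) * g i q = \<phi> i q ^ n * b i x" unfolding b_def by (simp only: mult.commute)
      qed (rule refl)
      finally have fin: "T x q = (\<Sum>i<r. \<phi> i q ^ n * b i x)" .
      have "Delta n P q x = T x q" unfolding Delta_def T_def T1_def using q by simp
      also have "\<dots> = (\<Sum>i<r. fun_scale (*) (\<phi> i q ^ n) (b i)) x"
        unfolding fin sum_fun_apply fun_scale_def ..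
      finally show "Delta n P q x = (\<Sum>i<r. fun_scale (*) (\<phi> i q ^ n) (b i)) x" .
    qed
  qed
qed

end
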